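(* Let $m\ge2$ and let $\mathcal{H}_{2m}$ be as defined in the context. For generic $x_1,\ldots,x_{m-1},x_{m+1},\ldots,x_{2m-1},x$, the limit of $\mathcal{H}_{2m}(x_1,\ldots,x_{m-1},x,x_{m+1},\ldots,x_{2m-1},y)$ as $y\to x+\eta$ exists and equals \[ \prod_{i\in\{1,\ldots,m-1\}\cup\{m+1,\ldots,2m-1\}}\theta(x-\eta-x_i)\theta(x-\eta+x_i)\ \cdot\ \mathcal{H}_{2m-2}(x_1,\ldots,x_{m-1},x_{m+1},\ldots,x_{2m-1}), \] where in $\mathcal{H}_{2m-2}$ the first group of variables is $x_1,\ldots,x_{m-1}$ and the second group is $x_{m+1},\ldots,x_{2m-1}$.
   Context: Theta functions: for $|q|<1$, $\theta_1(x;q)=2\sum_{n\ge0}(-1)^nq^{(n+1/2)^2}\sin((2n+1)x)$. Fix $p=e^{i\pi\tau}$ with $\operatorname{Im}\tau>0$, write $\theta(x)=\theta_1(x;p)$, set $\eta=\pi/3$, and $h(x,y)=\theta(\eta+x-y)\theta(\eta+x+y)\theta(\eta-x-y)\theta(\eta-x+y)$. For $k\ge1$, \[ \mathcal{H}_{2k}(x_1,\ldots,x_{2k})=\frac{\prod_{i=1}^k\prod_{j=k+1}^{2k}h(x_i,x_j)}{\prod_{1\le i<j\le k}\theta(x_i-x_j)\theta(x_i+x_j)\prod_{k+1\le i<j\le 2k}\theta(x_i-x_j)\theta(x_i+x_j)}\ \det_{1\le i\le k,\ k+1\le j\le 2k}\frac{1}{h(x_i,x_j)}, \] the first group of variables being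 $x_1,\ldots,x_k$ and the second $x_{k+1},\ldots,x_{2k}$. *)

theory Defs
  imports "HOL-Analysis.Analysis"
begin

text \<open>Jacobi theta function theta_1(z; p) with nome p = exp(i pi tau), where
  q^((n+1/2)^2) is read as exp(i pi tau (n+1/2)^2).\<close>
definition theta1 :: "complex \<Rightarrow> complex \<Rightarrow> complex" where
  "theta1 \<tau> z = 2 * (\<Sum>n. (-1) ^ n * exp (\<i> * complex_of_real pi * \<tau> * (of_nat n + 1/2) ^ 2)
                          * sin ((2 * of_nat n + 1) * z))"

definition eta :: complex where
  "eta = complex_of_real (pi / 3)"

definition hfun :: "complex \<Rightarrow> complex \<Rightarrow> complex \<Rightarrow> complex" where
  "hfun \<tau> x y = theta1 \<tau> (eta + x - y) * theta1 \<tau> (eta + x + y) *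
                 theta1 \<tau> (eta - x - y) * theta1 \<tau> (eta - x + y)"

definition det_nat :: "nat \<Rightarrow> (nat \<Rightarrow> nat \<Rightarrow> complex) \<Rightarrow> complex" where
  "det_nat k M = (\<Sum>\<sigma> | \<sigma> permutes {..<k}. of_int (sign \<sigma>) * (\<Prod>i<k. M i (\<sigma> i)))"

text \<open>H_{2k} with first group of variables a 0, ..., a (k-1) and
  second group b 0, ..., b (k-1).\<close>
definition H :: "complex \<Rightarrow> nat \<Rightarrow> (nat \<Rightarrow> complex) \<Rightarrow> (nat \<Rightarrow> complex) \<Rightarrow> complex" where
  "H \<tau> k a b =
     (\<Prod>i<k. \<Prod>j<k. hfun \<tau> (a i) (b j)) /
     ((\<Prod>i<k. \<Prod>j\<in>{i<..<k}. theta1 \<tau> (a i - a j) * theta1 \<tau> (a i + a j)) *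
      (\<Prod>i<k. \<Prod>j\<in>{i<..<k}. theta1 \<tau> (b i - b j) * theta1 \<tau> (b i + b j))) *
     det_nat k (\<lambda>i j. 1 / hfun \<tau> (a i) (b j))"

end

theory Submission
  imports Defs
begin
definition ac :: "complex \<Rightarrow> nat \<Rightarrow> complex" where
  "ac \<tau> n = (-1) ^ n * exp (\<i> * complex_of_real pi * \<tau> * (of_nat n + 1/2) ^ 2)"

lemma theta1_ac: "theta1 \<tau> z = 2 * (\<Sum>n. ac \<tau> n * sin ((2 * of_nat n + 1) * z))"
  by (simp add: theta1_def ac_def)

lemma norm_ac: "norm (ac \<tau> n) = exp (- pi * Im \<tau> * (real n + 1/2)^2)"
proof -
  have "(of_nat n + 1/2 :: complex) = of_real (real n + 1/2)" by simp
  then have e: "(of_nat n + 1/2 :: complex)^2 = of_real ((real n + 1/2)^2)" by (metis of_real_power)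
  show ?thesis unfolding ac_def norm_mult norm_power e
    by (simp add: norm_exp_eq_Re)
qed

lemma decay_summable:
  fixes c R :: real assumes c: "c > 0"
  shows "summable (\<lambda>n. exp (- c * (real n + 1/2)^2) * exp ((2 * real n + 1) * R))"
proof (rule summable_comparison_test_ev)
  have "norm (exp (-1::real)) < 1" by simp
  then show "summable (\<lambda>n::nat. (exp (-1)::real) ^ n)" by (rule summable_geometric)
  define N :: nat where "N = nat (ceiling ((3 * \<bar>R\<bar> + 1) / c)) + 1"
  have "eventually (\<lambda>n. n \<ge> N) sequentially" by (rule eventually_ge_at_top)
  then show "eventually (\<lambda>n. norm (exp (- c * (real n + 1/2)^2) * exp ((2 * real n + 1) * R)) \<le> (exp (-1)::real) ^ n) sequentially"
  proof eventually_elim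
    case (elim n)
    have N1: "real N \<ge> (3 * \<bar>R\<bar> + 1) / c" unfolding N_def by linarith
    have n1: "real n \<ge> 1" using elim N_def by simp
    have "c * real N \<ge> 3 * \<bar>R\<bar> + 1" using N1 c by (simp add: field_simps)
    moreover have "c * real N \<le> c * real n" using elim c by (simp add: mult_left_mono)
    ultimately have h1: "c * real n \<ge> 3 * \<bar>R\<bar> + 1" by linarith
    have h2: "c * (real n + 1/2)^2 \<ge> (c * real n) * real n" using c
      by (simp add: power2_eq_square algebra_simps)
    have h3: "(c * real n) * real n \<ge> (3 * \<bar>R\<bar> + 1) * real n"
      using h1 by (simp add: mult_right_mono)
    have h5: "(2 * real n + 1) * \<bar>R\<bar> \<le> (3 * real n) * \<bar>R\<bar>"
      using n1 by (intro mult_right_mono) auto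
    have h6: "(2 * real n + 1) * R \<le> (2 * real n + 1) * \<bar>R\<bar>"
      using n1 by (intro mult_left_mono) auto
    have A: "c * (real n + 1/2)^2 \<ge> (2 * real n + 1) * R + real n"
      using h2 h3 h5 h6 by (simp add: algebra_simps)
    have "norm (exp (- c * (real n + 1/2)^2) * exp ((2 * real n + 1) * R))
        = exp (- c * (real n + 1/2)^2) * exp ((2 * real n + 1) * R)" by simp
    also have "\<dots> = exp (- c * (real n + 1/2)^2 + (2 * real n + 1) * R)" by (rule exp_add[symmetric])
    also have "\<dots> \<le> exp (- real n)" using A by simp
    also have "\<dots> = exp (-1) ^ n" by (simp add: exp_of_nat_mult[symmetric])
    finally show ?case .
  qed
qed

lemma norm_sin_le_exp: "norm (sin (z::complex)) \<le> exp (norm z)"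
proof -
  have "Im z \<le> cmod z"
    using abs_Im_le_cmod abs_le_D1 by auto
  then have "exp (- Im z) + exp (Im z) \<le> exp (cmod z) * 2"
    by (metis exp_uminus_Im add_mono exp_le_cancel_iff mult_2_right)
  have "norm (sin z) = norm (exp (\<i> * z) - exp (- (\<i> * z))) / 2"
    by (simp add: sin_exp_eq norm_divide norm_mult)
  also have "\<dots> \<le> (norm (exp (\<i> * z)) + norm (exp (- (\<i> * z)))) / 2"
    by (intro divide_right_mono norm_triangle_ineq4) auto
  also have "\<dots> = (exp (- Im z) + exp (Im z)) / 2" by simp
  finally show ?thesis using \<open>exp (- Im z) + exp (Im z) \<le> exp (cmod z) * 2\<close> by simp
qed

lemma infsum_suminf_nat:
  fixes f :: "nat \<Rightarrow> 'a::{topological_comm_monoid_add,t2_space}"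
  assumes "f summable_on UNIV" shows "infsum f UNIV = suminf f"
  using has_sum_imp_sums[OF has_sum_infsum[OF assms]] by (simp add: sums_iff)

lemma abs_cos_coeff: "\<bar>cos_coeff k\<bar> \<le> 1 / fact k"
  by (simp add: cos_coeff_def)
lemma abs_sin_coeff: "\<bar>sin_coeff k\<bar> \<le> 1 / fact k"
  by (simp add: sin_coeff_def)

definition gt :: "complex \<Rightarrow> complex \<Rightarrow> complex \<Rightarrow> nat \<Rightarrow> nat \<Rightarrow> complex" where
  "gt \<tau> \<xi> t n k = ac \<tau> n * (sin ((2 * of_nat n + 1) * \<xi>) * of_real (cos_coeff k)
      + cos ((2 * of_nat n + 1) * \<xi>) * of_real (sin_coeff k)) * ((2 * of_nat n + 1) * t) ^ k"

lemma gt_row_sums: "(\<lambda>k. gt \<tau> \<xi> t n k) sums (ac \<tau> n * sin ((2 * of_nat n + 1) * (\<xi> + t)))"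
proof -
  define A where "A = (2 * of_nat n + 1) * \<xi>"
  define u where "u = (2 * of_nat n + 1) * t"
  have c: "(\<lambda>k. of_real (cos_coeff k) * u ^ k) sums cos u"
    using cos_converges[of u] by (simp add: scaleR_conv_of_real)
  have s: "(\<lambda>k. of_real (sin_coeff k) * u ^ k) sums sin u"
    using sin_converges[of u] by (simp add: scaleR_conv_of_real)
  have "(\<lambda>k. sin A * (of_real (cos_coeff k) * u ^ k) + cos A * (of_real (sin_coeff k) * u ^ k))
        sums (sin A * cos u + cos A * sin u)"
    by (intro sums_add sums_mult c s)
  then have "(\<lambda>k. ac \<tau> n * (sin A * (of_real (cos_coeff k) * u ^ k) + cos A * (of_real (sin_coeff k) * u ^ k)))
        sums (ac \<tau> n * (sin A * cos u + cos A * sin u))"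
    by (rule sums_mult)
  moreover have "sin A * cos u + cos A * sin u = sin ((2 * of_nat n + 1) * (\<xi> + t))"
    by (simp add: A_def u_def sin_add distrib_left)
  moreover have "gt \<tau> \<xi> t n k = ac \<tau> n * (sin A * (of_real (cos_coeff k) * u ^ k) + cos A * (of_real (sin_coeff k) * u ^ k))" for k
    by (simp add: gt_def A_def u_def algebra_simps)
  ultimately show ?thesis by simp
qed

definition Bd :: "complex \<Rightarrow> complex \<Rightarrow> complex \<Rightarrow> nat \<Rightarrow> nat \<Rightarrow> real" where
  "Bd \<tau> \<xi> t n k = norm (ac \<tau> n) * (2 * exp ((2 * real n + 1) * norm \<xi>))
       * ((2 * real n + 1) * norm t) ^ k / fact k"

lemma norm_lam: "norm (2 * of_nat n + 1 :: complex) = 2 * real n + 1"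
proof -
  have "(2 * of_nat n + 1 :: complex) = of_real (2 * real n + 1)" by simp
  then show ?thesis by (metis norm_of_real abs_of_nonneg of_nat_0_le_iff mult_nonneg_nonneg
        add_nonneg_nonneg zero_le_one zero_le_numeral)
qed

lemma gt_bound: "norm (gt \<tau> \<xi> t n k) \<le> Bd \<tau> \<xi> t n k"
proof -
  define A where "A = (2 * of_nat n + 1) * \<xi>"
  have nA: "norm A = (2 * real n + 1) * norm \<xi>" by (simp add: A_def norm_mult norm_lam)
  have sA: "norm (sin A) \<le> exp ((2 * real n + 1) * norm \<xi>)" using norm_sin_le_exp[of A] nA by simp
  have cA: "norm (cos A) \<le> exp ((2 * real n + 1) * norm \<xi>)" using norm_cos_le[of A] nA by simp
  have "norm (sin A * of_real (cos_coeff k) + cos A * of_real (sin_coeff k))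
      \<le> norm (sin A) * \<bar>cos_coeff k\<bar> + norm (cos A) * \<bar>sin_coeff k\<bar>"
    by (metis norm_triangle_ineq norm_mult norm_of_real)
  also have "\<dots> \<le> exp ((2 * real n + 1) * norm \<xi>) * (1 / fact k) + exp ((2 * real n + 1) * norm \<xi>) * (1 / fact k)"
    by (intro add_mono mult_mono sA cA abs_cos_coeff abs_sin_coeff) auto
  finally have m: "norm (sin A * of_real (cos_coeff k) + cos A * of_real (sin_coeff k))
      \<le> 2 * exp ((2 * real n + 1) * norm \<xi>) / fact k" by simp
  have "norm (gt \<tau> \<xi> t n k) = norm (ac \<tau> n) * norm (sin A * of_real (cos_coeff k) + cos A * of_real (sin_coeff k))
      * ((2 * real n + 1) * norm t) ^ k"
    by (simp add: gt_def A_def norm_mult norm_power norm_lam)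
  also have "\<dots> \<le> norm (ac \<tau> n) * (2 * exp ((2 * real n + 1) * norm \<xi>) / fact k) * ((2 * real n + 1) * norm t) ^ k"
    by (intro mult_right_mono mult_left_mono m) auto
  also have "\<dots> = Bd \<tau> \<xi> t n k" by (simp add: Bd_def)
  finally show ?thesis .
qed

lemma Bd_row_sums: "(\<lambda>k. Bd \<tau> \<xi> t n k) sums (norm (ac \<tau> n) * (2 * exp ((2 * real n + 1) * norm \<xi>))
       * exp ((2 * real n + 1) * norm t))"
proof -
  have "(\<lambda>k. ((2 * real n + 1) * norm t) ^ k /\<^sub>R fact k) sums exp ((2 * real n + 1) * norm t)"
    by (rule exp_converges)
  from sums_mult[OF this, of "norm (ac \<tau> n) * (2 * exp ((2 * real n + 1) * norm \<xi>))"]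
  have "(\<lambda>k. norm (ac \<tau> n) * (2 * exp ((2 * real n + 1) * norm \<xi>)) * (((2 * real n + 1) * norm t) ^ k /\<^sub>R fact k))
     sums (norm (ac \<tau> n) * (2 * exp ((2 * real n + 1) * norm \<xi>)) * exp ((2 * real n + 1) * norm t))" .
  moreover have "Bd \<tau> \<xi> t n k = norm (ac \<tau> n) * (2 * exp ((2 * real n + 1) * norm \<xi>)) * (((2 * real n + 1) * norm t) ^ k /\<^sub>R fact k)" for k
    by (simp add: Bd_def divide_inverse)
  ultimately show ?thesis by simp
qed

lemma Bd_nonneg: "Bd \<tau> \<xi> t n k \<ge> 0" by (simp add: Bd_def)

lemma Bd_total_summable:
  assumes "Im \<tau> > 0"
  shows "summable (\<lambda>n. norm (ac \<tau> n) * (2 * exp ((2 * real n + 1) * norm \<xi>)) * exp ((2 * real n + 1) * norm t))"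
proof -
  have "summable (\<lambda>n. exp (- (pi * Im \<tau>) * (real n + 1/2)^2) * exp ((2 * real n + 1) * (norm \<xi> + norm t)))"
    using assms by (intro decay_summable) simp
  from summable_mult[OF this, of 2] show ?thesis
    by (simp add: norm_ac distrib_left exp_add mult_ac)
qed

lemma gt_abs_summable:
  assumes "Im \<tau> > 0"
  shows "(\<lambda>x. norm ((\<lambda>(n,k). gt \<tau> \<xi> t n k) x)) summable_on (UNIV \<times> UNIV)"
proof -
  have "(\<lambda>x. norm ((\<lambda>(n,k). Bd \<tau> \<xi> t n k) x)) summable_on (UNIV \<times> UNIV)"
  proof (rule iffD2[OF Infinite_Sum.abs_summable_on_Sigma_iff], intro conjI ballI)
    fix n :: nat
    have "summable (\<lambda>k. norm (Bd \<tau> \<xi> t n k))" using Bd_row_sums[THEN sums_summable] Bd_nonneg by simp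
    then show "(\<lambda>k. norm ((\<lambda>(n,k). Bd \<tau> \<xi> t n k) (n, k))) summable_on UNIV"
      using summable_on_UNIV_nonneg_real_iff[of "\<lambda>k. norm (Bd \<tau> \<xi> t n k)"] by simp
  next
    have eq: "infsum (\<lambda>k. norm ((\<lambda>(n,k). Bd \<tau> \<xi> t n k) (n, k))) UNIV
        = norm (ac \<tau> n) * (2 * exp ((2 * real n + 1) * norm \<xi>)) * exp ((2 * real n + 1) * norm t)" for n
    proof -
      have "summable (\<lambda>k. Bd \<tau> \<xi> t n k)" using Bd_row_sums[THEN sums_summable] .
      then have "(\<lambda>k. Bd \<tau> \<xi> t n k) summable_on UNIV"
        using summable_on_UNIV_nonneg_real_iff[of "\<lambda>k. Bd \<tau> \<xi> t n k"] Bd_nonneg by simp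
      then show ?thesis using infsum_suminf_nat[of "\<lambda>k. Bd \<tau> \<xi> t n k"] Bd_nonneg Bd_row_sums
        by (simp add: sums_iff)
    qed
    show "(\<lambda>n. norm (infsum (\<lambda>k. norm ((\<lambda>(n,k). Bd \<tau> \<xi> t n k) (n, k))) UNIV)) summable_on UNIV"
      unfolding eq
      using summable_on_UNIV_nonneg_real_iff Bd_total_summable[OF assms, of \<xi> t]
      by (simp add: abs_mult)
  qed
  then show ?thesis
  proof (rule Infinite_Sum.abs_summable_on_comparison_test)
    fix x :: "nat \<times> nat"
    obtain n k where x: "x = (n, k)" by force
    have "norm (gt \<tau> \<xi> t n k) \<le> norm (Bd \<tau> \<xi> t n k)"
      using gt_bound[of \<tau> \<xi> t n k] Bd_nonneg[of \<tau> \<xi> t n k] by simp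
    then show "norm ((\<lambda>(n,k). gt \<tau> \<xi> t n k) x) \<le> norm ((\<lambda>(n,k). Bd \<tau> \<xi> t n k) x)"
      by (simp only: x prod.case)
  qed
qed

definition cf :: "complex \<Rightarrow> complex \<Rightarrow> nat \<Rightarrow> complex" where
  "cf \<tau> \<xi> k = 2 * infsum (\<lambda>n. ac \<tau> n * (sin ((2 * of_nat n + 1) * \<xi>) * of_real (cos_coeff k)
      + cos ((2 * of_nat n + 1) * \<xi>) * of_real (sin_coeff k)) * (2 * of_nat n + 1) ^ k) UNIV"

lemma theta_expand:
  assumes "Im \<tau> > 0"
  shows "(\<lambda>k. cf \<tau> \<xi> k * t ^ k) sums theta1 \<tau> (\<xi> + t)"
proof -
  define G where "G = (\<lambda>(n,k). gt \<tau> \<xi> t n k)"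
  have sG: "G summable_on (UNIV \<times> UNIV)"
    unfolding G_def by (rule abs_summable_summable) (rule gt_abs_summable[OF assms])
  obtain S where hS: "(G has_sum S) (UNIV \<times> UNIV)" using sG by (auto simp: summable_on_def)
  have rows: "((\<lambda>k. G (n, k)) has_sum (ac \<tau> n * sin ((2 * of_nat n + 1) * (\<xi> + t)))) UNIV" for n
  proof -
    have "summable (\<lambda>k. norm (gt \<tau> \<xi> t n k))"
      by (rule summable_comparison_test'[OF Bd_row_sums[of \<tau> \<xi> t n, THEN sums_summable], of 0])
         (simp add: gt_bound)
    from norm_summable_imp_has_sum[OF this gt_row_sums] show ?thesis by (simp add: G_def)
  qed
  have "((\<lambda>n. ac \<tau> n * sin ((2 * of_nat n + 1) * (\<xi> + t))) has_sum S) UNIV"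
    using has_sum_SigmaD[OF hS[unfolded UNIV_Times_UNIV[symmetric]]] rows by auto
  then have "(\<lambda>n. ac \<tau> n * sin ((2 * of_nat n + 1) * (\<xi> + t))) sums S" by (rule has_sum_imp_sums)
  then have th: "theta1 \<tau> (\<xi> + t) = 2 * S" by (simp add: theta1_ac sums_iff)
  have hS': "((\<lambda>(k,n). gt \<tau> \<xi> t n k) has_sum S) (UNIV \<times> UNIV)"
  proof -
    have "((\<lambda>(x,y). G (y,x)) has_sum S) (UNIV \<times> UNIV)" using hS has_sum_swap by blast
    moreover have "(\<lambda>(x,y). G (y,x)) = (\<lambda>(k,n). gt \<tau> \<xi> t n k)" by (auto simp: G_def)
    ultimately show ?thesis by simp
  qed
  have colsum: "(\<lambda>n. gt \<tau> \<xi> t n k) summable_on UNIV" for k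
    using summable_on_SigmaD1[of "\<lambda>k n. gt \<tau> \<xi> t n k" UNIV "\<lambda>_. UNIV" k] hS'
    by (auto simp: summable_on_def)
  have "((\<lambda>k. infsum (\<lambda>n. gt \<tau> \<xi> t n k) UNIV) has_sum S) UNIV"
    using has_sum_SigmaD[OF hS'] colsum by auto
  then have "(\<lambda>k. infsum (\<lambda>n. gt \<tau> \<xi> t n k) UNIV) sums S" by (rule has_sum_imp_sums)
  then have "(\<lambda>k. 2 * infsum (\<lambda>n. gt \<tau> \<xi> t n k) UNIV) sums (2 * S)" by (rule sums_mult)
  moreover have "2 * infsum (\<lambda>n. gt \<tau> \<xi> t n k) UNIV = cf \<tau> \<xi> k * t ^ k" for k
  proof -
    have "gt \<tau> \<xi> t n k = (ac \<tau> n * (sin ((2 * of_nat n + 1) * \<xi>) * of_real (cos_coeff k)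
      + cos ((2 * of_nat n + 1) * \<xi>) * of_real (sin_coeff k)) * (2 * of_nat n + 1) ^ k) * t ^ k" for n
      by (simp add: gt_def power_mult_distrib mult_ac)
    then show ?thesis by (simp add: cf_def infsum_cmult_left')
  qed
  ultimately show ?thesis using th by simp
qed

lemma theta_powser:
  assumes "Im \<tau> > 0"
  shows "(\<lambda>k. cf \<tau> \<xi> k * (x - \<xi>) ^ k) sums theta1 \<tau> x"
  using theta_expand[OF assms, of \<xi> "x - \<xi>"] by simp

lemma theta_conv_radius:
  assumes "Im \<tau> > 0"
  shows "ereal r \<le> conv_radius (cf \<tau> \<xi>)"
  using theta_powser[OF assms] by (auto simp: le_conv_radius_iff[where \<xi>=\<xi>] sums_iff)

lemma theta_isCont:
  assumes "Im \<tau> > 0"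
  shows "isCont (theta1 \<tau>) \<xi>"
proof -
  have "ereal 1 < ereal 2" by simp
  also have "\<dots> \<le> conv_radius (cf \<tau> \<xi>)" by (rule theta_conv_radius[OF assms])
  finally have "continuous_on (cball \<xi> 1) (\<lambda>x. suminf (\<lambda>i. cf \<tau> \<xi> i * (x - \<xi>) ^ i))"
    by (intro powser_continuous_suminf) simp
  moreover have "(\<lambda>x. suminf (\<lambda>i. cf \<tau> \<xi> i * (x - \<xi>) ^ i)) = theta1 \<tau>"
    using theta_powser[OF assms] by (auto simp: sums_iff)
  ultimately have "continuous_on (cball \<xi> 1) (theta1 \<tau>)" by metis
  then show ?thesis
    by (rule continuous_on_interior) simp
qed

lemma theta_continuous_on:
  assumes "Im \<tau> > 0"
  shows "continuous_on S (theta1 \<tau>)"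
  using theta_isCont[OF assms] by (simp add: continuous_at_imp_continuous_on)

lemma powser_0_nonzero':
  fixes a :: "nat \<Rightarrow> 'a::{real_normed_field,banach}"
  assumes r: "0 < r"
      and sm: "\<And>x. norm (x-\<xi>) < r \<Longrightarrow> (\<lambda>n. a n * (x-\<xi>) ^ n) sums (f x)"
      and [simp]: "f \<xi> = 0"
      and m0: "a m \<noteq> 0" and "m>0"
  obtains s where "0 < s" and "\<And>z. z \<in> cball \<xi> s - {\<xi>} \<Longrightarrow> f z \<noteq> 0"
proof -
  have "r \<le> conv_radius a"
    using sm sums_summable by (auto simp: le_conv_radius_iff [where \<xi>=\<xi>])
  obtain m where am: "a m \<noteq> 0" and az [simp]: "(\<And>n. n<m \<Longrightarrow> a n = 0)"
  proof
    show "a (LEAST n. a n \<noteq> 0) \<noteq> 0"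
      by (metis (mono_tags, lifting) m0 LeastI)
  qed (fastforce dest!: not_less_Least)
  define b where "b i = a (i+m) / a m" for i
  define g where "g x = suminf (\<lambda>i. b i * (x-\<xi>) ^ i)" for x
  have [simp]: "b 0 = 1"
    by (simp add: am b_def)
  { fix x::'a
    assume "norm (x-\<xi>) < r"
    then have "(\<lambda>n. (a m * (x-\<xi>)^m) * (b n * (x-\<xi>)^n)) sums (f x)"
      using am az sm sums_zero_iff_shift [of m "(\<lambda>n. a n * (x-\<xi>) ^ n)" "f x"]
      by (simp add: b_def monoid_mult_class.power_add algebra_simps)
    then have "x \<noteq> \<xi> \<Longrightarrow> (\<lambda>n. b n * (x-\<xi>)^n) sums (f x / (a m * (x-\<xi>)^m))"
      using am by (simp add: sums_mult_D)
  } note bsums = this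
  then have  "norm (x-\<xi>) < r \<Longrightarrow> summable (\<lambda>n. b n * (x-\<xi>)^n)" for x
    using sums_summable by (cases "x=\<xi>") auto
  then have "r \<le> conv_radius b"
    by (simp add: le_conv_radius_iff [where \<xi>=\<xi>])
  then have "r/2 < conv_radius b"
    using not_le order_trans r by fastforce
  then have "continuous_on (cball \<xi> (r/2)) g"
    using powser_continuous_suminf [of "r/2" b \<xi>] by (simp add: g_def)
  then obtain s where "s>0"  "\<And>x. \<lbrakk>norm (x-\<xi>) \<le> s; norm (x-\<xi>) \<le> r/2\<rbrakk> \<Longrightarrow> dist (g x) (g \<xi>) < 1/2"
  proof (rule continuous_onE)
    show "\<xi> \<in> cball \<xi> (r / 2)" "1/2 > (0::real)"
      using r by auto
  qed (auto simp: dist_commute dist_norm)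
  moreover have "g \<xi> = 1"
    by (simp add: g_def)
  ultimately have gnz: "\<And>x. \<lbrakk>norm (x-\<xi>) \<le> s; norm (x-\<xi>) \<le> r/2\<rbrakk> \<Longrightarrow> (g x) \<noteq> 0"
    by fastforce
  show ?thesis
  proof
    have *: "f x \<noteq> 0" if "x \<noteq> \<xi>" "norm (x-\<xi>) \<le> s" "norm (x-\<xi>) \<le> r/2" for x
      using bsums [of x] that gnz [of x] r sums_iff unfolding g_def by fastforce
    show "\<And>z. z \<in> cball \<xi> (min s (r / 2)) - {\<xi>} \<Longrightarrow> f z \<noteq> 0"
      by (simp add: "*" dist_norm norm_minus_commute)
  qed (use \<open>0 < r\<close> \<open>0 < s\<close> in auto)
qed

lemma theta_iso:
  assumes "Im \<tau> > 0" and nz: "\<exists>z. theta1 \<tau> z \<noteq> 0"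
  shows "\<exists>s>0. \<forall>z. z \<noteq> \<xi> \<and> norm (z - \<xi>) < s \<longrightarrow> theta1 \<tau> z \<noteq> 0"
proof (cases "theta1 \<tau> \<xi> = 0")
  case False
  from continuous_at_avoid[OF theta_isCont[OF assms(1)] False]
  obtain e where "e > 0" "\<forall>y. dist \<xi> y < e \<longrightarrow> theta1 \<tau> y \<noteq> 0" by blast
  then show ?thesis by (metis dist_commute dist_norm)
next
  case True
  have c0: "cf \<tau> \<xi> 0 = theta1 \<tau> \<xi>"
    using theta_powser[OF assms(1), of \<xi> \<xi>] by (simp add: powser_sums_zero_iff)
  have "\<exists>m. cf \<tau> \<xi> m \<noteq> 0"
  proof (rule ccontr)
    assume "\<not> ?thesis"
    then have "theta1 \<tau> z = 0" for z
      using theta_powser[OF assms(1), of \<xi> z] by (simp add: sums_iff)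
    then show False using nz by blast
  qed
  then obtain m where m: "cf \<tau> \<xi> m \<noteq> 0" by blast
  with c0 True have "m > 0" by (cases m) auto
  obtain s where s: "0 < s" "\<And>z. z \<in> cball \<xi> s - {\<xi>} \<Longrightarrow> theta1 \<tau> z \<noteq> 0"
    by (rule powser_0_nonzero'[of 1 \<xi> "cf \<tau> \<xi>" "theta1 \<tau>" m])
       (use theta_powser[OF assms(1)] True m \<open>m > 0\<close> in auto)
  show ?thesis
    by (rule exI[of _ s]) (use s in \<open>auto simp: dist_norm norm_minus_commute\<close>)
qed

lemma theta_summable:
  assumes "Im \<tau> > 0"
  shows "summable (\<lambda>n. ac \<tau> n * sin ((2 * of_nat n + 1) * z))"
proof (rule summable_comparison_test'[of "\<lambda>n. exp (- (pi * Im \<tau>) * (real n + 1/2)^2) * exp ((2 * real n + 1) * norm z)" 0])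
  show "summable (\<lambda>n. exp (- (pi * Im \<tau>) * (real n + 1/2)^2) * exp ((2 * real n + 1) * norm z))"
    using assms by (intro decay_summable) simp
  fix n :: nat
  have "norm (sin ((2 * of_nat n + 1) * z)) \<le> exp ((2 * real n + 1) * norm z)"
    using norm_sin_le_exp[of "(2 * of_nat n + 1) * z"] by (simp add: norm_mult norm_lam)
  then show "norm (ac \<tau> n * sin ((2 * of_nat n + 1) * z)) \<le> exp (- (pi * Im \<tau>) * (real n + 1/2)^2) * exp ((2 * real n + 1) * norm z)"
    by (simp add: norm_mult norm_ac mult_left_mono)
qed

lemma theta_zero: "theta1 \<tau> 0 = 0"
  by (simp add: theta1_def)

lemma theta_odd:
  assumes "Im \<tau> > 0"
  shows "theta1 \<tau> (- z) = - theta1 \<tau> z"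
proof -
  have "(\<lambda>n. ac \<tau> n * sin ((2 * of_nat n + 1) * (- z))) = (\<lambda>n. - (ac \<tau> n * sin ((2 * of_nat n + 1) * z)))"
    by auto
  then show ?thesis
    using suminf_minus[OF theta_summable[OF assms, of z]] by (simp add: theta1_ac)
qed

lemma cos_odd_pi: "cos ((2 * of_nat n + 1) * complex_of_real pi) = -1"
proof -
  have "(2 * of_nat n + 1) * complex_of_real pi = of_real (real (2 * n + 1) * pi)" by simp
  then show ?thesis by (simp only: cos_of_real cos_npi) simp
qed

lemma sin_odd_pi: "sin ((2 * of_nat n + 1) * complex_of_real pi) = 0"
proof -
  have "(2 * of_nat n + 1) * complex_of_real pi = of_real (real (2 * n + 1) * pi)" by simp
  then show ?thesis by (simp only: sin_of_real sin_npi) simp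
qed

lemma theta_pi:
  assumes "Im \<tau> > 0"
  shows "theta1 \<tau> (z + complex_of_real pi) = - theta1 \<tau> z"
proof -
  have "(\<lambda>n. ac \<tau> n * sin ((2 * of_nat n + 1) * (z + complex_of_real pi))) = (\<lambda>n. - (ac \<tau> n * sin ((2 * of_nat n + 1) * z)))"
    by (auto simp: distrib_left sin_add cos_odd_pi sin_odd_pi)
  then show ?thesis
    using suminf_minus[OF theta_summable[OF assms, of z]] by (simp add: theta1_ac)
qed

lemma theta_2eta:
  assumes "Im \<tau> > 0"
  shows "theta1 \<tau> (z + 2 * eta) = - theta1 \<tau> (z - eta)"
proof -
  have e: "z + 2 * eta = (z - eta) + complex_of_real pi" by (simp add: eta_def)
  show ?thesis unfolding e by (rule theta_pi[OF assms])
qed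

lemma h_y0:
  assumes "Im \<tau> > 0"
  shows "hfun \<tau> a (x + eta) = - (theta1 \<tau> (a - x) * theta1 \<tau> (a + x))
            * (theta1 \<tau> (x - eta - a) * theta1 \<tau> (x - eta + a))"
proof -
  have 1: "theta1 \<tau> (eta + a + (x + eta)) = - theta1 \<tau> (x - eta + a)"
    using theta_2eta[OF assms, of "a + x"] by (simp add: algebra_simps)
  have 2: "theta1 \<tau> (eta - a - (x + eta)) = - theta1 \<tau> (a + x)"
    using theta_odd[OF assms, of "a + x"] by (simp add: algebra_simps)
  have 3: "theta1 \<tau> (eta - a + (x + eta)) = - theta1 \<tau> (x - eta - a)"
    using theta_2eta[OF assms, of "x - a"] by (simp add: algebra_simps)
  have 4: "eta + a - (x + eta) = a - x" by simp
  show ?thesis unfolding hfun_def 1 2 3 4 by (simp add: algebra_simps)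
qed

lemma h_xb:
  assumes "Im \<tau> > 0"
  shows "hfun \<tau> x b = - (theta1 \<tau> (b - (x + eta)) * theta1 \<tau> (b + (x + eta)))
            * (theta1 \<tau> (x - eta - b) * theta1 \<tau> (x - eta + b))"
proof -
  have 1: "theta1 \<tau> (eta + x - b) = - theta1 \<tau> (b - (x + eta))"
    using theta_odd[OF assms, of "eta + x - b"] by (simp add: algebra_simps)
  have 2: "theta1 \<tau> (eta - x - b) = - theta1 \<tau> (x - eta + b)"
    using theta_odd[OF assms, of "x - eta + b"] by (simp add: algebra_simps)
  have 3: "theta1 \<tau> (eta - x + b) = - theta1 \<tau> (x - eta - b)"
    using theta_odd[OF assms, of "x - eta - b"] by (simp add: algebra_simps)
  have 4: "eta + x + b = b + (x + eta)" by simp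
  show ?thesis unfolding hfun_def 1 2 3 4 by (simp add: algebra_simps)
qed

lemma isCont_theta_comp [continuous_intros]:
  assumes "Im \<tau> > 0" "isCont f y"
  shows "isCont (\<lambda>y. theta1 \<tau> (f y)) y"
  by (rule isCont_o2[OF assms(2) theta_isCont[OF assms(1)]])

lemma isCont_hfun2 [continuous_intros]:
  assumes "Im \<tau> > 0"
  shows "isCont (\<lambda>y. hfun \<tau> u y) y0"
  unfolding hfun_def using assms by (intro continuous_intros) auto

lemma prod_upper_Suc:
  "(\<Prod>i<Suc n. \<Prod>j\<in>{i<..<Suc n}. f i j) = (\<Prod>i<n. \<Prod>j\<in>{i<..<n}. f i j) * (\<Prod>i<n. f i n)"
proof -
  have "(\<Prod>i<n. \<Prod>j\<in>{i<..<Suc n}. f i j) = (\<Prod>i<n. (\<Prod>j\<in>{i<..<n}. f i j) * f i n)"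
  proof (rule prod.cong[OF refl])
    fix i assume "i \<in> {..<n}"
    then have "{i<..<Suc n} = insert n {i<..<n}" by auto
    then show "(\<Prod>j\<in>{i<..<Suc n}. f i j) = (\<Prod>j\<in>{i<..<n}. f i j) * f i n" by (simp add: mult.commute)
  qed
  moreover have "{n<..<Suc n} = {}" by auto
  ultimately show ?thesis by (simp add: prod.distrib)
qed

lemma permutes_fix_last:
  "(\<sigma> permutes {..<Suc n} \<and> \<sigma> n = n) \<longleftrightarrow> \<sigma> permutes {..<n}"
proof
  assume a: "\<sigma> permutes {..<Suc n} \<and> \<sigma> n = n"
  show "\<sigma> permutes {..<n}"
    unfolding permutes_def
  proof (intro conjI allI impI)
    fix x assume "x \<notin> {..<n}"
    then show "\<sigma> x = x" using a permutes_not_in[of \<sigma> "{..<Suc n}" x] by (cases "x = n") auto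
  next
    fix y show "\<exists>!x. \<sigma> x = y" using a by (simp add: permutes_def)
  qed
next
  assume "\<sigma> permutes {..<n}"
  then show "\<sigma> permutes {..<Suc n} \<and> \<sigma> n = n"
    by (auto intro: permutes_subset permutes_not_in)
qed

lemma det_nat_cong:
  assumes "\<And>i j. i < n \<Longrightarrow> j < n \<Longrightarrow> M i j = M' i j"
  shows "det_nat n M = det_nat n M'"
  unfolding det_nat_def
proof (rule sum.cong[OF refl])
  fix \<sigma> assume "\<sigma> \<in> {\<sigma>. \<sigma> permutes {..<n}}"
  then have "\<sigma> i < n" if "i < n" for i using permutes_in_image[of \<sigma> "{..<n}" i] that by auto
  then show "of_int (sign \<sigma>) * (\<Prod>i<n. M i (\<sigma> i)) = of_int (sign \<sigma>) * (\<Prod>i<n. M' i (\<sigma> i))"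
    using assms by auto
qed

definition S2 :: "nat \<Rightarrow> (nat \<Rightarrow> nat) set" where
  "S2 n = {\<sigma>. \<sigma> permutes {..<Suc n} \<and> \<sigma> n \<noteq> n}"

lemma det_split:
  "det_nat (Suc n) M = M n n * det_nat n M + (\<Sum>\<sigma>\<in>S2 n. of_int (sign \<sigma>) * (\<Prod>i<Suc n. M i (\<sigma> i)))"
proof -
  let ?A = "{\<sigma>. \<sigma> permutes {..<Suc n}}"
  let ?B = "{\<sigma>. \<sigma> n = n}"
  let ?g = "\<lambda>\<sigma>. of_int (sign \<sigma>) * (\<Prod>i<Suc n. M i (\<sigma> i))"
  have fin: "finite ?A" by (rule finite_permutations) simp
  have "det_nat (Suc n) M = sum ?g (?A \<inter> ?B) + sum ?g (?A - ?B)"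
    unfolding det_nat_def using sum.Int_Diff[OF fin, of ?g ?B] by simp
  moreover have "?A \<inter> ?B = {\<sigma>. \<sigma> permutes {..<n}}" using permutes_fix_last by blast
  moreover have "?A - ?B = S2 n" by (auto simp: S2_def)
  moreover have "sum ?g {\<sigma>. \<sigma> permutes {..<n}} = M n n * det_nat n M"
    unfolding det_nat_def sum_distrib_left
  proof (rule sum.cong[OF refl])
    fix \<sigma> assume "\<sigma> \<in> {\<sigma>. \<sigma> permutes {..<n}}"
    then have "\<sigma> n = n" using permutes_not_in by fastforce
    then show "?g \<sigma> = M n n * (of_int (sign \<sigma>) * (\<Prod>i<n. M i (\<sigma> i)))" by (simp add: mult_ac)
  qed
  ultimately show ?thesis by simp
qed

lemma H_limit:
  fixes \<tau> y0 :: complex and a b :: "nat \<Rightarrow> complex" and n :: nat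
  assumes tau: "Im \<tau> > 0"
    and ev: "eventually (\<lambda>y. hfun \<tau> (a n) y \<noteq> 0) (at y0)"
    and h0: "hfun \<tau> (a n) y0 = 0"
    and hi: "\<And>i. i < n \<Longrightarrow> hfun \<tau> (a i) y0 \<noteq> 0"
    and Da: "(\<Prod>i<Suc n. \<Prod>j\<in>{i<..<Suc n}. theta1 \<tau> (a i - a j) * theta1 \<tau> (a i + a j)) \<noteq> 0"
    and Db: "(\<Prod>i<n. \<Prod>j\<in>{i<..<n}. theta1 \<tau> (b i - b j) * theta1 \<tau> (b i + b j))
             * (\<Prod>i<n. theta1 \<tau> (b i - y0) * theta1 \<tau> (b i + y0)) \<noteq> 0"
  shows "((\<lambda>y. H \<tau> (Suc n) a (b(n := y))) \<longlongrightarrow>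
     (\<Prod>i<n. \<Prod>j<n. hfun \<tau> (a i) (b j)) * (\<Prod>i<n. hfun \<tau> (a i) y0) * (\<Prod>j<n. hfun \<tau> (a n) (b j))
     / ((\<Prod>i<Suc n. \<Prod>j\<in>{i<..<Suc n}. theta1 \<tau> (a i - a j) * theta1 \<tau> (a i + a j)) *
        ((\<Prod>i<n. \<Prod>j\<in>{i<..<n}. theta1 \<tau> (b i - b j) * theta1 \<tau> (b i + b j))
             * (\<Prod>i<n. theta1 \<tau> (b i - y0) * theta1 \<tau> (b i + y0))))
     * det_nat n (\<lambda>i j. 1 / hfun \<tau> (a i) (b j))) (at y0)"
proof -
  define bb where "bb y = b(n := y)" for y
  define P0 where "P0 = (\<Prod>i<n. \<Prod>j<n. hfun \<tau> (a i) (b j))"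
  define Ai where "Ai y = (\<Prod>i<n. hfun \<tau> (a i) y)" for y
  define Bn where "Bn = (\<Prod>j<n. hfun \<tau> (a n) (b j))"
  define DA where "DA = (\<Prod>i<Suc n. \<Prod>j\<in>{i<..<Suc n}. theta1 \<tau> (a i - a j) * theta1 \<tau> (a i + a j))"
  define DBn where "DBn = (\<Prod>i<n. \<Prod>j\<in>{i<..<n}. theta1 \<tau> (b i - b j) * theta1 \<tau> (b i + b j))"
  define X where "X y = (\<Prod>i<n. theta1 \<tau> (b i - y) * theta1 \<tau> (b i + y))" for y
  define C where "C = det_nat n (\<lambda>i j. 1 / hfun \<tau> (a i) (b j))"
  define R where "R y = (\<Sum>\<sigma>\<in>S2 n. of_int (sign \<sigma>) * (\<Prod>i<Suc n. 1 / hfun \<tau> (a i) (bb y (\<sigma> i))))" for y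
  define hn where "hn y = hfun \<tau> (a n) y" for y
  define F where "F y = P0 * Ai y * Bn / (DA * (DBn * X y)) * (C + hn y * R y)" for y
  have bbl: "bb y j = b j" if "j < n" for y j using that by (simp add: bb_def)
  have bbn: "bb y n = y" for y by (simp add: bb_def)
  have num: "(\<Prod>i<Suc n. \<Prod>j<Suc n. hfun \<tau> (a i) (bb y j)) = P0 * Ai y * Bn * hn y" for y
  proof -
    have "(\<Prod>i<Suc n. \<Prod>j<Suc n. hfun \<tau> (a i) (bb y j)) = (\<Prod>i<Suc n. (\<Prod>j<n. hfun \<tau> (a i) (b j)) * hfun \<tau> (a i) y)"
      by (simp add: bbl bbn)
    also have "\<dots> = P0 * Ai y * (Bn * hn y)"
      by (simp add: prod.distrib P0_def Ai_def Bn_def hn_def)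
    finally show ?thesis by (simp add: mult_ac)
  qed
  have denb: "(\<Prod>i<Suc n. \<Prod>j\<in>{i<..<Suc n}. theta1 \<tau> (bb y i - bb y j) * theta1 \<tau> (bb y i + bb y j)) = DBn * X y" for y
  proof -
    have "(\<Prod>i<Suc n. \<Prod>j\<in>{i<..<Suc n}. theta1 \<tau> (bb y i - bb y j) * theta1 \<tau> (bb y i + bb y j))
        = (\<Prod>i<n. \<Prod>j\<in>{i<..<n}. theta1 \<tau> (bb y i - bb y j) * theta1 \<tau> (bb y i + bb y j))
          * (\<Prod>i<n. theta1 \<tau> (bb y i - bb y n) * theta1 \<tau> (bb y i + bb y n))"
      by (rule prod_upper_Suc)
    also have "\<dots> = DBn * X y"
      unfolding DBn_def X_def
      by (intro arg_cong2[where f="(*)"] prod.cong refl) (auto simp: bbl bbn)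
    finally show ?thesis .
  qed
  have det: "det_nat (Suc n) (\<lambda>i j. 1 / hfun \<tau> (a i) (bb y j)) = (1 / hn y) * C + R y" for y
  proof -
    have "det_nat n (\<lambda>i j. 1 / hfun \<tau> (a i) (bb y j)) = C"
      unfolding C_def by (rule det_nat_cong) (simp add: bbl)
    then show ?thesis using det_split[of n "\<lambda>i j. 1 / hfun \<tau> (a i) (bb y j)"]
      by (simp add: R_def hn_def bbn)
  qed
  have Hy: "H \<tau> (Suc n) a (bb y) = P0 * Ai y * Bn * hn y / (DA * (DBn * X y)) * ((1 / hn y) * C + R y)" for y
    unfolding H_def num denb det DA_def by simp
  have HF: "H \<tau> (Suc n) a (bb y) = F y" if "hn y \<noteq> 0" for y
  proof -
    define K where "K = P0 * Ai y * Bn / (DA * (DBn * X y))"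
    have "H \<tau> (Suc n) a (bb y) = K * (hn y * ((1 / hn y) * C) + hn y * R y)"
      unfolding Hy K_def by (simp add: distrib_left mult_ac)
    also have "hn y * ((1 / hn y) * C) = C" using that by simp
    finally show ?thesis unfolding F_def K_def by simp
  qed
  have evH: "eventually (\<lambda>y. F y = H \<tau> (Suc n) a (b(n := y))) (at y0)"
    using ev by eventually_elim (simp add: HF hn_def bb_def[symmetric])
  have contR: "isCont R y0"
    unfolding R_def
  proof (intro continuous_sum continuous_mult continuous_const continuous_prod)
    fix \<sigma> i assume \<sigma>: "\<sigma> \<in> S2 n" and i: "i \<in> {..<Suc n}"
    show "isCont (\<lambda>y. 1 / hfun \<tau> (a i) (bb y (\<sigma> i))) y0"
    proof (cases "\<sigma> i = n")
      case True
      then have "i \<noteq> n" using \<sigma> by (auto simp: S2_def)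
      then have "i < n" using i by auto
      have "(\<lambda>y. 1 / hfun \<tau> (a i) (bb y (\<sigma> i))) = (\<lambda>y. 1 / hfun \<tau> (a i) y)" using True by (simp add: bbn)
      then show ?thesis using hi[OF \<open>i < n\<close>] tau by (simp add: continuous_intros)
    next
      case False
      then have "(\<lambda>y. 1 / hfun \<tau> (a i) (bb y (\<sigma> i))) = (\<lambda>y. 1 / hfun \<tau> (a i) (b (\<sigma> i)))"
        by (simp add: bb_def)
      then show ?thesis by simp
    qed
  qed
  have DA0: "DA \<noteq> 0" using Da by (simp add: DA_def)
  have DB0: "DBn * X y0 \<noteq> 0" using Db by (simp add: DBn_def X_def)
  have contF: "isCont F y0"
    unfolding F_def Ai_def X_def hn_def
    using tau DA0 DB0 contR by (intro continuous_intros) (auto simp: X_def)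
  have "F y0 = P0 * Ai y0 * Bn / (DA * (DBn * X y0)) * C"
    using h0 by (simp add: F_def hn_def)
  then have "(F \<longlongrightarrow> P0 * Ai y0 * Bn / (DA * (DBn * X y0)) * C) (at y0)"
    using contF by (simp add: isCont_def)
  then have "((\<lambda>y. H \<tau> (Suc n) a (b(n := y))) \<longlongrightarrow> P0 * Ai y0 * Bn / (DA * (DBn * X y0)) * C) (at y0)"
    by (rule tendsto_cong[THEN iffD1, rotated]) (rule evH)
  then show ?thesis
    by (simp add: P0_def Ai_def Bn_def DA_def DBn_def X_def C_def)
qed

lemma interior_Union_closed_empty:
  assumes "finite F" "\<And>S. S \<in> F \<Longrightarrow> closed S \<and> interior S = {}"
  shows "interior (\<Union>F) = {}"
  using assms
proof (induction F rule: finite_induct)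
  case empty then show ?case by simp
next
  case (insert S F)
  then have "interior (\<Union>F) = {}" by auto
  moreover have "closed S" "interior S = {}" using insert.prems by auto
  ultimately show ?case using interior_closed_Un_empty_interior[of S "\<Union>F"] by simp
qed

lemma ev_theta_lin:
  assumes tau: "Im \<tau> > 0" and nz: "\<exists>z. theta1 \<tau> z \<noteq> 0" and s: "s \<noteq> 0"
  shows "eventually (\<lambda>y. theta1 \<tau> (\<alpha> + s * y) \<noteq> 0) (at y0)"
proof -
  obtain e where e: "e > 0" "\<And>z. z \<noteq> \<alpha> + s * y0 \<Longrightarrow> norm (z - (\<alpha> + s * y0)) < e \<Longrightarrow> theta1 \<tau> z \<noteq> 0"
    using theta_iso[OF tau nz, of "\<alpha> + s * y0"] by blast
  show ?thesis
    unfolding eventually_at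
  proof (intro exI[of _ "e / norm s"] conjI ballI allI impI)
    show "e / norm s > 0" using e s by simp
    fix y assume y: "y \<noteq> y0 \<and> dist y y0 < e / norm s"
    have "\<alpha> + s * y - (\<alpha> + s * y0) = s * (y - y0)" by (simp add: algebra_simps)
    then have "norm (\<alpha> + s * y - (\<alpha> + s * y0)) = norm s * norm (y - y0)" by (simp add: norm_mult)
    also have "\<dots> < e" using y s by (simp add: dist_norm field_simps)
    finally show "theta1 \<tau> (\<alpha> + s * y) \<noteq> 0"
      using e(2)[of "\<alpha> + s * y"] y s by auto
  qed
qed

lemma ev_theta_plus:
  assumes "Im \<tau> > 0" "\<exists>z. theta1 \<tau> z \<noteq> 0"
  shows "eventually (\<lambda>y. theta1 \<tau> (\<alpha> + y) \<noteq> 0) (at y0)"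
  using ev_theta_lin[OF assms, of 1 \<alpha> y0] by simp

lemma ev_theta_minus:
  assumes "Im \<tau> > 0" "\<exists>z. theta1 \<tau> z \<noteq> 0"
  shows "eventually (\<lambda>y. theta1 \<tau> (\<alpha> - y) \<noteq> 0) (at y0)"
  using ev_theta_lin[OF assms, of "-1" \<alpha> y0] by simp

lemma ev_hfun:
  assumes "Im \<tau> > 0" "\<exists>z. theta1 \<tau> z \<noteq> 0"
  shows "eventually (\<lambda>y. hfun \<tau> x y \<noteq> 0) (at y0)"
proof -
  have "eventually (\<lambda>y. theta1 \<tau> (eta + x - y) \<noteq> 0 \<and> theta1 \<tau> (eta + x + y) \<noteq> 0 \<and>
     theta1 \<tau> (eta - x - y) \<noteq> 0 \<and> theta1 \<tau> (eta - x + y) \<noteq> 0) (at y0)"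
    by (intro eventually_conj ev_theta_plus ev_theta_minus assms)
  then show ?thesis by eventually_elim (simp add: hfun_def)
qed

definition Zi :: "complex \<Rightarrow> complex \<Rightarrow> complex \<Rightarrow> complex \<Rightarrow> nat \<Rightarrow> nat \<Rightarrow> (nat \<Rightarrow> complex) set" where
  "Zi \<tau> c e1 e2 p q = {w. theta1 \<tau> (c + e1 * w p + e2 * w q) = 0}"

definition Zg :: "complex \<Rightarrow> nat \<Rightarrow> (nat \<Rightarrow> complex) set" where
  "Zg \<tau> m = \<Union>((\<lambda>(c,e1,e2,p,q). Zi \<tau> c e1 e2 p q) `
      ({0, eta, -eta, 2*eta} \<times> {1,-1} \<times> {1,-1} \<times> {(p,q). p < 2*m \<and> q < 2*m \<and> p \<noteq> q}))"

lemmas Zg_Union = Zg_def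

lemma Zi_closed:
  assumes "Im \<tau> > 0"
  shows "closed (Zi \<tau> c e1 e2 p q)"
  unfolding Zi_def
proof (rule closed_Collect_eq)
  have cf: "continuous_on UNIV (\<lambda>w::nat \<Rightarrow> complex. c + e1 * w p + e2 * w q)"
    by (intro continuous_on_add continuous_on_mult continuous_on_const continuous_on_product_coordinates)
  then show "continuous_on UNIV (\<lambda>w::nat \<Rightarrow> complex. theta1 \<tau> (c + e1 * w p + e2 * w q))"
    using continuous_on_compose[OF cf theta_continuous_on[OF assms]] by (simp add: o_def)
qed simp

lemma Zi_interior:
  assumes tau: "Im \<tau> > 0" and nz: "\<exists>z. theta1 \<tau> z \<noteq> 0" and e1: "e1 \<noteq> 0" and pq: "p \<noteq> q"
  shows "interior (Zi \<tau> c e1 e2 p q) = {}"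
proof (rule ccontr)
  assume "interior (Zi \<tau> c e1 e2 p q) \<noteq> {}"
  then obtain w where w: "w \<in> interior (Zi \<tau> c e1 e2 p q)" by blast
  define \<gamma> where "\<gamma> t = w(p := w p + t)" for t
  have cg: "continuous_on UNIV \<gamma>"
    unfolding \<gamma>_def
  proof (intro continuous_on_coordinatewise_then_product)
    fix i
    show "continuous_on UNIV (\<lambda>t. (w(p := w p + t)) i)"
    proof (cases "i = p")
      case True
      then have e: "(\<lambda>t. (w(p := w p + t)) i) = (\<lambda>t. w p + t)" by auto
      show ?thesis unfolding e by (intro continuous_on_add continuous_on_const continuous_on_id)
    next
      case False
      then have e: "(\<lambda>t. (w(p := w p + t)) i) = (\<lambda>t. w i)" by auto
      show ?thesis unfolding e by (rule continuous_on_const)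
    qed
  qed
  have op: "open (\<gamma> -` interior (Zi \<tau> c e1 e2 p q))"
    using continuous_on_open_vimage[OF open_UNIV, of \<gamma>] cg by auto
  have "0 \<in> \<gamma> -` interior (Zi \<tau> c e1 e2 p q)" using w by (simp add: \<gamma>_def)
  then obtain e where e: "e > 0" "ball 0 e \<subseteq> \<gamma> -` interior (Zi \<tau> c e1 e2 p q)"
    using op openE by blast
  define \<xi> where "\<xi> = c + e1 * w p + e2 * w q"
  have vanish: "theta1 \<tau> z = 0" if "norm (z - \<xi>) < e * norm e1" for z
  proof -
    define t where "t = (z - \<xi>) / e1"
    have "norm t < e" using that e1 by (simp add: t_def norm_divide field_simps)
    then have "t \<in> ball 0 e" by (simp add: dist_norm)
    then have "\<gamma> t \<in> interior (Zi \<tau> c e1 e2 p q)" using e(2) by blast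
    then have "\<gamma> t \<in> Zi \<tau> c e1 e2 p q" using interior_subset by blast
    moreover have "c + e1 * \<gamma> t p + e2 * \<gamma> t q = z"
    proof -
      have g1: "\<gamma> t p = w p + t" and g2: "\<gamma> t q = w q" using pq by (auto simp: \<gamma>_def)
      have "c + e1 * \<gamma> t p + e2 * \<gamma> t q = \<xi> + e1 * t" unfolding g1 g2 \<xi>_def by (simp add: algebra_simps)
      also have "e1 * t = z - \<xi>" using e1 by (simp add: t_def)
      finally show ?thesis by simp
    qed
    ultimately show ?thesis by (simp add: Zi_def)
  qed
  obtain s where s: "s > 0" "\<And>z. z \<noteq> \<xi> \<and> norm (z - \<xi>) < s \<longrightarrow> theta1 \<tau> z \<noteq> 0"
    using theta_iso[OF tau nz, of \<xi>] by blast
  define d where "d = min s (e * norm e1) / 2"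
  have E: "e * norm e1 > 0" using e e1 by simp
  have d: "d > 0" "d < s" "d < e * norm e1" using s E by (auto simp: d_def)
  have z1: "\<xi> + of_real d \<noteq> \<xi>" using d(1) by simp
  have z2: "norm (\<xi> + of_real d - \<xi>) = d" using d(1) by simp
  have "theta1 \<tau> (\<xi> + of_real d) \<noteq> 0" using s(2)[of "\<xi> + of_real d"] z1 z2 d(2) by simp
  moreover have "theta1 \<tau> (\<xi> + of_real d) = 0" by (rule vanish) (use z2 d(3) in simp)
  ultimately show False by simp
qed

lemma Zg_closed_interior:
  assumes tau: "Im \<tau> > 0" and nz: "\<exists>z. theta1 \<tau> z \<noteq> 0"
  shows "closed (Zg \<tau> m) \<and> interior (Zg \<tau> m) = {}"
proof -
  let ?I = "{0, eta, -eta, 2*eta} \<times> {1::complex,-1} \<times> {1::complex,-1} \<times> {(p,q). p < 2*m \<and> q < 2*m \<and> p \<noteq> q}"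
  have f1: "finite {(p,q). p < 2*m \<and> q < 2*m \<and> p \<noteq> q}"
    by (rule finite_subset[of _ "{..<2*m} \<times> {..<2*m}"]) auto
  have f0: "finite {0, eta, -eta, 2*eta}" by simp
  have f2: "finite {1::complex, -1}" by simp
  have fin: "finite ?I"
    by (rule finite_cartesian_product[OF f0 finite_cartesian_product[OF f2 finite_cartesian_product[OF f2 f1]]])
  define F where "F = (\<lambda>(c,e1,e2,p,q). Zi \<tau> c e1 e2 p q) ` ?I"
  have mem': "closed S \<and> interior S = {}" if S: "S \<in> F" for S
  proof -
    from S obtain x where xI: "x \<in> ?I" and Sx: "S = (\<lambda>(c,e1,e2,p,q). Zi \<tau> c e1 e2 p q) x"
      unfolding F_def by (rule imageE)
    obtain c e1 e2 p q where xe: "x = (c,e1,e2,p,q)" by (cases x) blast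
    have x: "(c,e1,e2,p,q) \<in> ?I" using xI xe by simp
    have SZ: "S = Zi \<tau> c e1 e2 p q" using Sx xe by simp
    have "e1 \<noteq> 0" "p \<noteq> q" using x by auto
    then show ?thesis unfolding SZ using Zi_closed[OF tau] Zi_interior[OF tau nz] by simp
  qed
  have finF: "finite F" unfolding F_def using fin by (rule finite_imageI)
  have "closed (\<Union>F)" by (rule closed_Union[OF finF]) (use mem' in blast)
  moreover have "interior (\<Union>F) = {}" using finF mem' by (rule interior_Union_closed_empty)
  moreover have "Zg \<tau> m = \<Union>F" unfolding Zg_def F_def by (rule refl)
  ultimately show ?thesis by simp
qed

lemma not_Zg:
  assumes "w \<notin> Zg \<tau> m" "c \<in> {0, eta, -eta, 2*eta}" "e1 \<in> {1,-1}" "e2 \<in> {1,-1}" "p < 2*m" "q < 2*m" "p \<noteq> q"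
  shows "theta1 \<tau> (c + e1 * w p + e2 * w q) \<noteq> 0"
proof
  assume z: "theta1 \<tau> (c + e1 * w p + e2 * w q) = 0"
  let ?I = "{0, eta, -eta, 2*eta} \<times> {1::complex,-1} \<times> {1::complex,-1} \<times> {(p,q). p < 2*m \<and> q < 2*m \<and> p \<noteq> q}"
  have I1: "(c,e1,e2,p,q) \<in> ?I" using assms(2-7) by simp
  have W: "w \<in> (\<lambda>(c,e1,e2,p,q). Zi \<tau> c e1 e2 p q) (c,e1,e2,p,q)" using z by (simp add: Zi_def)
  have "w \<in> Zg \<tau> m" unfolding Zg_def by (rule UN_I[where B="\<lambda>(c,e1,e2,p,q). Zi \<tau> c e1 e2 p q", OF I1 W])
  then show False using assms(1) by simp
qed

lemma prod_ne0:
  fixes f :: "'a \<Rightarrow> complex"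
  assumes "finite A" "\<And>i. i \<in> A \<Longrightarrow> f i \<noteq> 0"
  shows "prod f A \<noteq> 0"
  using assms by (simp add: prod_zero_iff)

lemma prod_neg_mult:
  fixes A B :: "nat \<Rightarrow> complex"
  shows "(\<Prod>i<n. - A i * B i) = (-1) ^ n * (\<Prod>i<n. A i) * (\<Prod>i<n. B i)"
  by (induct n) (simp_all add: algebra_simps)

lemma index_split:
  assumes m: "m = Suc n"
  shows "{1..2*m-1} - {m} = (\<lambda>i. i+1) ` {..<n} \<union> (\<lambda>j. m+1+j) ` {..<n}"
proof (rule set_eqI)
  fix k
  show "k \<in> {1..2*m-1} - {m} \<longleftrightarrow> k \<in> (\<lambda>i. i+1) ` {..<n} \<union> (\<lambda>j. m+1+j) ` {..<n}"
  proof
    assume k: "k \<in> {1..2*m-1} - {m}"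
    show "k \<in> (\<lambda>i. i+1) ` {..<n} \<union> (\<lambda>j. m+1+j) ` {..<n}"
    proof (cases "k < m")
      case True
      then have "k = (k - 1) + 1" "k - 1 < n" using k m by auto
      then show ?thesis by blast
    next
      case False
      then have "k = m + 1 + (k - m - 1)" "k - m - 1 < n" using k m by auto
      then show ?thesis by blast
    qed
  next
    assume "k \<in> (\<lambda>i. i+1) ` {..<n} \<union> (\<lambda>j. m+1+j) ` {..<n}"
    then show "k \<in> {1..2*m-1} - {m}" using m by auto
  qed
qed

lemma prod_index_split:
  assumes m: "m = Suc n"
  shows "(\<Prod>i\<in>{1..2*m-1} - {m}. f i) = (\<Prod>i<n. f (i+1)) * (\<Prod>j<n. f (m+1+j))"
proof -
  have d: "(\<lambda>i. i+1) ` {..<n} \<inter> (\<lambda>j. m+1+j) ` {..<n} = {}" using m by auto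
  have "(\<Prod>i\<in>{1..2*m-1} - {m}. f i) = (\<Prod>i\<in>(\<lambda>i. i+1) ` {..<n}. f i) * (\<Prod>i\<in>(\<lambda>j. m+1+j) ` {..<n}. f i)"
    unfolding index_split[OF m] by (rule prod.union_disjoint) (use d in auto)
  also have "\<dots> = (\<Prod>i<n. f (i+1)) * (\<Prod>j<n. f (m+1+j))"
    by (subst prod.reindex, simp add: inj_on_def, subst prod.reindex, simp add: inj_on_def, simp)
  finally show ?thesis .
qed

lemma H_zero_theta:
  assumes "\<And>z. theta1 \<tau> z = 0" "k > 0"
  shows "H \<tau> k a b = 0"
  using assms by (simp add: H_def hfun_def)

theorem mainTheorem3:
  fixes \<tau> :: complex and m :: nat
  assumes "Im \<tau> > 0" and "m \<ge> 2"
  shows "\<exists>Z :: (nat \<Rightarrow> complex) set. closed Z \<and> interior Z = {} \<and>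
    (\<forall>w. w \<notin> Z \<longrightarrow>
      ((\<lambda>y. H \<tau> m (\<lambda>i. w (i + 1)) ((\<lambda>j. w (m + 1 + j))(m - 1 := y)))
        \<longlongrightarrow> (\<Prod>i\<in>{1..2*m-1} - {m}. theta1 \<tau> (w m - eta - w i) * theta1 \<tau> (w m - eta + w i))
              * H \<tau> (m - 1) (\<lambda>i. w (i + 1)) (\<lambda>j. w (m + 1 + j)))
      (at (w m + eta)))"
proof -
  have tau: "Im \<tau> > 0" by fact
  define n where "n = m - 1"
  have m: "m = Suc n" and n1: "n \<ge> 1" using assms(2) by (simp_all add: n_def)
  show ?thesis
  proof (cases "\<exists>z. theta1 \<tau> z \<noteq> 0")
    case False
    then have th0: "\<And>z. theta1 \<tau> z = 0" by blast
    show ?thesis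
    proof (intro exI[of _ "{}"] conjI allI impI)
      fix w :: "nat \<Rightarrow> complex"
      have "H \<tau> m (\<lambda>i. w (i + 1)) ((\<lambda>j. w (m + 1 + j))(m - 1 := y)) = 0" for y
        using H_zero_theta[OF th0] m by simp
      moreover have "H \<tau> (m - 1) (\<lambda>i. w (i + 1)) (\<lambda>j. w (m + 1 + j)) = 0"
        using H_zero_theta[OF th0] m n1 by simp
      ultimately show "((\<lambda>y. H \<tau> m (\<lambda>i. w (i + 1)) ((\<lambda>j. w (m + 1 + j))(m - 1 := y)))
        \<longlongrightarrow> (\<Prod>i\<in>{1..2*m-1} - {m}. theta1 \<tau> (w m - eta - w i) * theta1 \<tau> (w m - eta + w i))
              * H \<tau> (m - 1) (\<lambda>i. w (i + 1)) (\<lambda>j. w (m + 1 + j))) (at (w m + eta))"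
        by simp
    qed auto
  next
    case True
    note nz = True
    show ?thesis
    proof (intro exI[of _ "Zg \<tau> m"] conjI allI impI)
      show "closed (Zg \<tau> m)" "interior (Zg \<tau> m) = {}" using Zg_closed_interior[OF tau nz] by auto
      fix w :: "nat \<Rightarrow> complex"
      assume wZ: "w \<notin> Zg \<tau> m"
      define a where "a i = w (i + 1)" for i
      define b where "b j = w (m + 1 + j)" for j
      define x where "x = w m"
      define y0 where "y0 = x + eta"
      have an: "a n = x" using m by (simp add: a_def x_def)
      have G: "theta1 \<tau> (c + e1 * w p + e2 * w q) \<noteq> 0"
        if "c \<in> {0, eta, -eta, 2*eta}" "e1 \<in> {1,-1}" "e2 \<in> {1,-1}" "p < 2*m" "q < 2*m" "p \<noteq> q" for c e1 e2 p q
        using not_Zg[OF wZ that] .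
      have ga1: "theta1 \<tau> (a i - a j) \<noteq> 0" "theta1 \<tau> (a i + a j) \<noteq> 0" if "i < j" "j < Suc n" for i j
      proof -
        have "theta1 \<tau> (0 + 1 * w (i+1) + (-1) * w (j+1)) \<noteq> 0" by (rule G) (use that m in auto)
        then show "theta1 \<tau> (a i - a j) \<noteq> 0" by (simp add: a_def)
        have "theta1 \<tau> (0 + 1 * w (i+1) + 1 * w (j+1)) \<noteq> 0" by (rule G) (use that m in auto)
        then show "theta1 \<tau> (a i + a j) \<noteq> 0" by (simp add: a_def)
      qed
      have gb1: "theta1 \<tau> (b i - b j) \<noteq> 0" "theta1 \<tau> (b i + b j) \<noteq> 0" if "i < j" "j < n" for i j
      proof -
        have "theta1 \<tau> (0 + 1 * w (m+1+i) + (-1) * w (m+1+j)) \<noteq> 0" by (rule G) (use that m in auto)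
        then show "theta1 \<tau> (b i - b j) \<noteq> 0" by (simp add: b_def)
        have "theta1 \<tau> (0 + 1 * w (m+1+i) + 1 * w (m+1+j)) \<noteq> 0" by (rule G) (use that m in auto)
        then show "theta1 \<tau> (b i + b j) \<noteq> 0" by (simp add: b_def)
      qed
      have gb2: "theta1 \<tau> (b i - y0) \<noteq> 0" "theta1 \<tau> (b i + y0) \<noteq> 0" if "i < n" for i
      proof -
        have "theta1 \<tau> (- eta + 1 * w (m+1+i) + (-1) * w m) \<noteq> 0" by (rule G) (use that m in auto)
        then show "theta1 \<tau> (b i - y0) \<noteq> 0" by (simp add: b_def y0_def x_def algebra_simps)
        have "theta1 \<tau> (eta + 1 * w (m+1+i) + 1 * w m) \<noteq> 0" by (rule G) (use that m in auto)
        then show "theta1 \<tau> (b i + y0) \<noteq> 0" by (simp add: b_def y0_def x_def algebra_simps)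
      qed
      have ga2: "theta1 \<tau> (a i - x) \<noteq> 0" "theta1 \<tau> (a i + x) \<noteq> 0"
                "theta1 \<tau> (x - eta - a i) \<noteq> 0" "theta1 \<tau> (x - eta + a i) \<noteq> 0" if "i < n" for i
      proof -
        have "theta1 \<tau> (0 + 1 * w (i+1) + (-1) * w m) \<noteq> 0" by (rule G) (use that m in auto)
        then show "theta1 \<tau> (a i - x) \<noteq> 0" by (simp add: a_def x_def)
        have "theta1 \<tau> (0 + 1 * w (i+1) + 1 * w m) \<noteq> 0" by (rule G) (use that m in auto)
        then show "theta1 \<tau> (a i + x) \<noteq> 0" by (simp add: a_def x_def)
        have "theta1 \<tau> (- eta + 1 * w m + (-1) * w (i+1)) \<noteq> 0" by (rule G) (use that m in auto)
        then show "theta1 \<tau> (x - eta - a i) \<noteq> 0" by (simp add: a_def x_def algebra_simps)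
        have "theta1 \<tau> (- eta + 1 * w m + 1 * w (i+1)) \<noteq> 0" by (rule G) (use that m in auto)
        then show "theta1 \<tau> (x - eta + a i) \<noteq> 0" by (simp add: a_def x_def algebra_simps)
      qed
      define T where "T u = theta1 \<tau> (x - eta - u) * theta1 \<tau> (x - eta + u)" for u
      define Xa where "Xa = (\<Prod>i<n. theta1 \<tau> (a i - x) * theta1 \<tau> (a i + x))"
      define Xb where "Xb = (\<Prod>i<n. theta1 \<tau> (b i - y0) * theta1 \<tau> (b i + y0))"
      define DAn where "DAn = (\<Prod>i<n. \<Prod>j\<in>{i<..<n}. theta1 \<tau> (a i - a j) * theta1 \<tau> (a i + a j))"
      define DBn where "DBn = (\<Prod>i<n. \<Prod>j\<in>{i<..<n}. theta1 \<tau> (b i - b j) * theta1 \<tau> (b i + b j))"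
      define P0 where "P0 = (\<Prod>i<n. \<Prod>j<n. hfun \<tau> (a i) (b j))"
      define C where "C = det_nat n (\<lambda>i j. 1 / hfun \<tau> (a i) (b j))"
      have Xa0: "Xa \<noteq> 0" unfolding Xa_def by (rule prod_ne0) (use ga2 in auto)
      have Xb0: "Xb \<noteq> 0" unfolding Xb_def by (rule prod_ne0) (use gb2 in auto)
      have DA: "(\<Prod>i<Suc n. \<Prod>j\<in>{i<..<Suc n}. theta1 \<tau> (a i - a j) * theta1 \<tau> (a i + a j)) = DAn * Xa"
        unfolding prod_upper_Suc DAn_def Xa_def an ..
      have DA0: "(\<Prod>i<Suc n. \<Prod>j\<in>{i<..<Suc n}. theta1 \<tau> (a i - a j) * theta1 \<tau> (a i + a j)) \<noteq> 0"
        by (intro prod_ne0) (use ga1 in auto)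
      have DBn0: "DBn \<noteq> 0" unfolding DBn_def by (intro prod_ne0) (use gb1 in auto)
      have hi: "hfun \<tau> (a i) y0 \<noteq> 0" if "i < n" for i
        unfolding y0_def h_y0[OF tau] using ga2[OF that] by simp
      have h0: "hfun \<tau> (a n) y0 = 0" by (simp add: an y0_def hfun_def theta_zero)
      have lim: "((\<lambda>y. H \<tau> (Suc n) a (b(n := y))) \<longlongrightarrow>
         P0 * (\<Prod>i<n. hfun \<tau> (a i) y0) * (\<Prod>j<n. hfun \<tau> (a n) (b j)) / (DAn * Xa * (DBn * Xb)) * C) (at y0)"
        using H_limit[OF tau ev_hfun[OF tau nz] h0 hi DA0, of b] DBn0 Xb0
        unfolding DA P0_def DBn_def Xb_def C_def by simp
      have Ai: "(\<Prod>i<n. hfun \<tau> (a i) y0) = (-1)^n * Xa * (\<Prod>i<n. T (a i))"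
        unfolding y0_def h_y0[OF tau] prod_neg_mult Xa_def T_def ..
      have Bn: "(\<Prod>j<n. hfun \<tau> (a n) (b j)) = (-1)^n * Xb * (\<Prod>j<n. T (b j))"
        unfolding an h_xb[OF tau] prod_neg_mult Xb_def T_def y0_def ..
      have Hn: "H \<tau> n a b = P0 / (DAn * DBn) * C"
        by (simp add: H_def P0_def DAn_def DBn_def C_def)
      have val: "P0 * ((-1)^n * Xa * (\<Prod>i<n. T (a i))) * ((-1)^n * Xb * (\<Prod>j<n. T (b j))) / (DAn * Xa * (DBn * Xb)) * C
          = ((\<Prod>i<n. T (a i)) * (\<Prod>j<n. T (b j))) * (P0 / (DAn * DBn) * C)"
      proof -
        have s: "(-1::complex)^n * (-1)^n = 1" by (simp flip: power_add)
        have "P0 * ((-1)^n * Xa * (\<Prod>i<n. T (a i))) * ((-1)^n * Xb * (\<Prod>j<n. T (b j)))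
            = (P0 * (\<Prod>i<n. T (a i)) * (\<Prod>j<n. T (b j)) * ((-1)^n * (-1)^n)) * (Xa * Xb)"
          by (simp add: mult_ac)
        also have "\<dots> = (P0 * (\<Prod>i<n. T (a i)) * (\<Prod>j<n. T (b j))) * (Xa * Xb)" by (simp only: s mult_1_right)
        finally have num: "P0 * ((-1)^n * Xa * (\<Prod>i<n. T (a i))) * ((-1)^n * Xb * (\<Prod>j<n. T (b j)))
            = (P0 * (\<Prod>i<n. T (a i)) * (\<Prod>j<n. T (b j))) * (Xa * Xb)" .
        have den: "DAn * Xa * (DBn * Xb) = (DAn * DBn) * (Xa * Xb)" by (simp add: mult_ac)
        have "Xa * Xb \<noteq> 0" using Xa0 Xb0 by simp
        then have "(P0 * (\<Prod>i<n. T (a i)) * (\<Prod>j<n. T (b j))) * (Xa * Xb) / ((DAn * DBn) * (Xa * Xb))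
             = (P0 * (\<Prod>i<n. T (a i)) * (\<Prod>j<n. T (b j))) / (DAn * DBn)"
          by (rule mult_divide_mult_cancel_right)
        then show ?thesis unfolding num den by (simp add: mult_ac)
      qed
      have tgt: "(\<Prod>i\<in>{1..2*m-1} - {m}. theta1 \<tau> (w m - eta - w i) * theta1 \<tau> (w m - eta + w i))
          = (\<Prod>i<n. T (a i)) * (\<Prod>j<n. T (b j))"
        unfolding prod_index_split[OF m] by (simp add: T_def a_def b_def x_def)
      have "((\<lambda>y. H \<tau> (Suc n) a (b(n := y))) \<longlongrightarrow>
          (\<Prod>i\<in>{1..2*m-1} - {m}. theta1 \<tau> (w m - eta - w i) * theta1 \<tau> (w m - eta + w i)) * H \<tau> n a b) (at y0)"
        using lim unfolding Ai Bn val Hn tgt .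
      then show "((\<lambda>y. H \<tau> m (\<lambda>i. w (i + 1)) ((\<lambda>j. w (m + 1 + j))(m - 1 := y)))
        \<longlongrightarrow> (\<Prod>i\<in>{1..2*m-1} - {m}. theta1 \<tau> (w m - eta - w i) * theta1 \<tau> (w m - eta + w i))
              * H \<tau> (m - 1) (\<lambda>i. w (i + 1)) (\<lambda>j. w (m + 1 + j))) (at (w m + eta))"
        unfolding a_def[abs_def] b_def[abs_def] y0_def x_def m by simp
    qed
  qed
qed

end
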